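(* Let $G$ be a finite simple graph and $k\ge 0$ an integer. If $Z_k(G)\le k$, then $Z_k(G)=Z(G)$.
   Context: Filling rule: if a filled vertex has exactly one unfilled neighbor (and any number of filled neighbors), that neighbor becomes filled; "applying the filling rule in a subgraph $H$" means applying it with neighborhoods taken in $H$. The $Z_q$-Game on $G$ ($q\ge 0$ an integer): initially all vertices are unfilled; a player repeatedly performs one of the following operations until all vertices are filled: (1) for one token, change any vertex from unfilled to filled; (2) at no cost, apply the filling rule in $G$; (3) if $F$ is the current set of filled vertices and $U_1,\dots,U_k$ are the vertex sets of the connected components of $G[V(G)\setminus F]$ with $k\ge q+1$, the player announces a selection of at least $q+1$ of the $U_i$ to an oracle (an adversary), the oracle returns a nonempty subset $\{U_{i_1},\dots,U_{i_\ell}\}$ of the selected components, and the player may at no cost apply the filling rule in $G[F\cup U_{i_1}\cup\cdots\cup U_{i_\ell}]$. $Z_q(G)$ is the minimum number of tokens with which the player can guarantee that all vertices become filled, regardless of the oracle's responses. The $Z$-Game is the same game with only operations (1) and (2) allowed, and $Z(G)$ (the zero forcing number) is the minimum number of tokens needed there to fill all vertices. *)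

theory Defs
  imports Main
begin

definition simple_graph :: "'a set \<Rightarrow> ('a \<Rightarrow> 'a \<Rightarrow> bool) \<Rightarrow> bool" where
  "simple_graph V E \<longleftrightarrow> finite V \<and> (\<forall>x y. E x y \<longrightarrow> x \<in> V \<and> y \<in> V)
     \<and> (\<forall>x y. E x y \<longrightarrow> E y x) \<and> (\<forall>x. \<not> E x x)"

definition fill_step :: "'a set \<Rightarrow> ('a \<Rightarrow> 'a \<Rightarrow> bool) \<Rightarrow> 'a set \<Rightarrow> 'a set \<Rightarrow> bool" where
  "fill_step W E F F' \<longleftrightarrow> (\<exists>u w. u \<in> F \<and> u \<in> W \<and> w \<in> W \<and> w \<notin> F
       \<and> {x \<in> W. E u x \<and> x \<notin> F} = {w} \<and> F' = insert w F)"

definition unfilled_components :: "'a set \<Rightarrow> ('a \<Rightarrow> 'a \<Rightarrow> bool) \<Rightarrow> 'a set \<Rightarrow> 'a set set" where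
  "unfilled_components V E F =
     {C. \<exists>v \<in> V - F. C = {w. (\<lambda>x y. x \<in> V - F \<and> y \<in> V - F \<and> E x y)\<^sup>*\<^sup>* v w}}"

text \<open>zq_win V E q F t: from filled set F, with t tokens left, the player can
  guarantee to fill all vertices in the Z_q-game, whatever the adversary answers.\<close>
inductive zq_win :: "'a set \<Rightarrow> ('a \<Rightarrow> 'a \<Rightarrow> bool) \<Rightarrow> nat \<Rightarrow> 'a set \<Rightarrow> nat \<Rightarrow> bool"
  for V E q where
  finished: "V \<subseteq> F \<Longrightarrow> zq_win V E q F t"
| token: "v \<in> V \<Longrightarrow> v \<notin> F \<Longrightarrow> zq_win V E q (insert v F) t \<Longrightarrow> zq_win V E q F (Suc t)"
| fill: "fill_step V E F F' \<Longrightarrow> zq_win V E q F' t \<Longrightarrow> zq_win V E q F t"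
| query: "S \<subseteq> unfilled_components V E F \<Longrightarrow> finite S \<Longrightarrow> card S \<ge> q + 1 \<Longrightarrow>
    (\<forall>R. R \<subseteq> S \<longrightarrow> R \<noteq> {} \<longrightarrow>
        (\<exists>F'. (fill_step (F \<union> \<Union>R) E)\<^sup>*\<^sup>* F F' \<and> zq_win V E q F' t)) \<Longrightarrow>
    zq_win V E q F t"

inductive z_win :: "'a set \<Rightarrow> ('a \<Rightarrow> 'a \<Rightarrow> bool) \<Rightarrow> 'a set \<Rightarrow> nat \<Rightarrow> bool"
  for V E where
  finished: "V \<subseteq> F \<Longrightarrow> z_win V E F t"
| token: "v \<in> V \<Longrightarrow> v \<notin> F \<Longrightarrow> z_win V E (insert v F) t \<Longrightarrow> z_win V E F (Suc t)"
| fill: "fill_step V E F F' \<Longrightarrow> z_win V E F' t \<Longrightarrow> z_win V E F t"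

definition Zq :: "'a set \<Rightarrow> ('a \<Rightarrow> 'a \<Rightarrow> bool) \<Rightarrow> nat \<Rightarrow> nat" where
  "Zq V E q = (LEAST t. zq_win V E q {} t)"

definition Z :: "'a set \<Rightarrow> ('a \<Rightarrow> 'a \<Rightarrow> bool) \<Rightarrow> nat" where
  "Z V E = (LEAST t. z_win V E {} t)"

end

theory Submission
  imports Defs
begin

definition act :: "('a \<Rightarrow> 'a \<Rightarrow> bool) \<Rightarrow> 'a set \<Rightarrow> 'a set" where
  "act E F = {u \<in> F. \<exists>x. E u x \<and> x \<notin> F}"

lemma act_finite:
  assumes "simple_graph V E" shows "finite (act E F)"
proof -
  have "act E F \<subseteq> V" using assms unfolding act_def simple_graph_def by blast
  moreover have "finite V" using assms unfolding simple_graph_def by blast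
  ultimately show ?thesis by (meson finite_subset)
qed

lemma comp_disjoint:
  assumes "simple_graph V E" "U \<in> unfilled_components V E F" "U' \<in> unfilled_components V E F"
    "x \<in> U" "x \<in> U'"
  shows "U = U'"
proof -
  define r where "r = (\<lambda>x y. x \<in> V - F \<and> y \<in> V - F \<and> E x y)"
  have sym: "r x y \<Longrightarrow> r y x" for x y using assms(1) unfolding r_def simple_graph_def by blast
  have symr: "r\<^sup>*\<^sup>* x y \<Longrightarrow> r\<^sup>*\<^sup>* y x" for x y
  proof (induction rule: rtranclp_induct)
    case base then show ?case by simp
  next
    case (step y z) then show ?case
      by (meson converse_rtranclp_into_rtranclp sym)
  qed
  obtain v where v: "U = {w. r\<^sup>*\<^sup>* v w}" using assms(2) unfolding unfilled_components_def r_def by blast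
  obtain v' where v': "U' = {w. r\<^sup>*\<^sup>* v' w}" using assms(3) unfolding unfilled_components_def r_def by blast
  have "r\<^sup>*\<^sup>* v x" "r\<^sup>*\<^sup>* v' x" using assms(4,5) v v' by auto
  have vv: "r\<^sup>*\<^sup>* v v'" using \<open>r\<^sup>*\<^sup>* v x\<close> symr[OF \<open>r\<^sup>*\<^sup>* v' x\<close>]
    by (rule rtranclp_trans)
  have vv': "r\<^sup>*\<^sup>* v' v" using symr[OF vv] .
  show ?thesis unfolding v v'
  proof (intro set_eqI iffI; simp)
    fix w assume "r\<^sup>*\<^sup>* v w" then show "r\<^sup>*\<^sup>* v' w" using vv' by (rule rtranclp_trans[rotated])
  next
    fix w assume "r\<^sup>*\<^sup>* v' w" then show "r\<^sup>*\<^sup>* v w" using vv by (rule rtranclp_trans[rotated])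
  qed
qed

definition nb :: "('a \<Rightarrow> 'a \<Rightarrow> bool) \<Rightarrow> 'a set \<Rightarrow> 'a set set \<Rightarrow> 'a \<Rightarrow> 'a set" where
  "nb E F R u = {x \<in> \<Union>R. E u x \<and> x \<notin> F}"

lemma blocking_aux:
  assumes disj: "\<And>U U' x. U \<in> S \<Longrightarrow> U' \<in> S \<Longrightarrow> x \<in> U \<Longrightarrow> x \<in> U' \<Longrightarrow> U = U'"
    and finA: "finite (act E F)"
  shows "finite R \<Longrightarrow> R \<subseteq> S \<Longrightarrow> card {u \<in> act E F. nb E F R u \<noteq> {}} < card R \<Longrightarrow>
     \<exists>R'. R' \<subseteq> R \<and> R' \<noteq> {} \<and> (\<forall>u\<in>F. \<forall>w. nb E F R' u \<noteq> {w})"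
proof (induction "card R" arbitrary: R rule: less_induct)
  case less
  show ?case
  proof (cases "\<forall>u\<in>F. \<forall>w. nb E F R u \<noteq> {w}")
    case True
    moreover have "R \<noteq> {}" using less.prems(3) by auto
    ultimately show ?thesis by blast
  next
    case False
    then obtain u w where u: "u \<in> F" "nb E F R u = {w}" by blast
    then have w: "w \<in> \<Union>R" "E u w" "w \<notin> F" unfolding nb_def by auto
    then obtain U where U: "U \<in> R" "w \<in> U" by blast
    define R' where "R' = R - {U}"
    have fR': "finite R'" using less.prems(1) unfolding R'_def by simp
    have cR': "card R' = card R - 1" unfolding R'_def using U less.prems(1) by simp
    have wR': "w \<notin> \<Union>R'"
    proof
      assume "w \<in> \<Union>R'"
      then obtain U' where "U' \<in> R'" "w \<in> U'" by blast
      then have "U' = U" using disj U less.prems(2) unfolding R'_def by blast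
      then show False using \<open>U' \<in> R'\<close> unfolding R'_def by simp
    qed
    have sub: "nb E F R' v \<subseteq> nb E F R v" for v unfolding nb_def R'_def by auto
    have n1: "nb E F R' u \<subseteq> {w}" using sub[of u] u(2) by simp
    have n2: "w \<notin> nb E F R' u" using wR' unfolding nb_def by simp
    have "nb E F R' u = {}" using n1 n2 by blast
    have uact: "u \<in> act E F" using u w unfolding act_def by blast
    have D: "{v \<in> act E F. nb E F R' v \<noteq> {}} \<subseteq> {v \<in> act E F. nb E F R v \<noteq> {}} - {u}"
    proof
      fix v assume "v \<in> {v \<in> act E F. nb E F R' v \<noteq> {}}"
      then have "v \<in> act E F" "nb E F R' v \<noteq> {}" by auto
      moreover have "nb E F R v \<noteq> {}" using sub[of v] \<open>nb E F R' v \<noteq> {}\<close> by auto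
      moreover have "v \<noteq> u" using \<open>nb E F R' u = {}\<close> \<open>nb E F R' v \<noteq> {}\<close> by auto
      ultimately show "v \<in> {v \<in> act E F. nb E F R v \<noteq> {}} - {u}" by simp
    qed
    have fD: "finite {v \<in> act E F. nb E F R v \<noteq> {}}" using finA by simp
    have "card {v \<in> act E F. nb E F R' v \<noteq> {}} \<le> card ({v \<in> act E F. nb E F R v \<noteq> {}} - {u})"
      using D fD by (simp add: card_mono)
    also have "\<dots> = card {v \<in> act E F. nb E F R v \<noteq> {}} - 1"
      using uact u(2) fD by simp
    finally have "card {v \<in> act E F. nb E F R' v \<noteq> {}} < card R'"
      using cR' less.prems(3) card_gt_0_iff[of "{v \<in> act E F. nb E F R v \<noteq> {}}"] fD uact u(2)
      by fastforce
    moreover have "card R' < card R" using cR' less.prems(3) by linarith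
    moreover have "R' \<subseteq> S" using less.prems(2) unfolding R'_def by blast
    ultimately obtain R'' where "R'' \<subseteq> R'" "R'' \<noteq> {}" "\<forall>u\<in>F. \<forall>w. nb E F R'' u \<noteq> {w}"
      using less.hyps[OF _ fR'] by blast
    then show ?thesis unfolding R'_def by blast
  qed
qed

lemma blocking:
  assumes "simple_graph V E" "S \<subseteq> unfilled_components V E F" "finite S"
    "card (act E F) < card S"
  shows "\<exists>R. R \<subseteq> S \<and> R \<noteq> {} \<and> (\<forall>F'. \<not> fill_step (F \<union> \<Union>R) E F F')"
proof -
  have "card {u \<in> act E F. nb E F S u \<noteq> {}} \<le> card (act E F)"
    using act_finite[OF assms(1)] by (intro card_mono) auto
  then obtain R where R: "R \<subseteq> S" "R \<noteq> {}" "\<forall>u\<in>F. \<forall>w. nb E F R u \<noteq> {w}"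
  proof -
    have disj: "\<And>U U' x. U \<in> S \<Longrightarrow> U' \<in> S \<Longrightarrow> x \<in> U \<Longrightarrow> x \<in> U' \<Longrightarrow> U = U'"
      using comp_disjoint[OF assms(1)] assms(2) by blast
    have cS: "card {u \<in> act E F. nb E F S u \<noteq> {}} < card S" using assms(4) \<open>card _ \<le> _\<close> by linarith
    have "\<exists>R'. R' \<subseteq> S \<and> R' \<noteq> {} \<and> (\<forall>u\<in>F. \<forall>w. nb E F R' u \<noteq> {w})"
      apply (rule blocking_aux[where S=S and R=S])
           apply (rule disj; assumption)
          apply (rule act_finite[OF assms(1)])
         apply (rule assms(3))
        apply (rule subset_refl)
       apply (rule cS)
      done
    then obtain R' where "R' \<subseteq> S \<and> R' \<noteq> {} \<and> (\<forall>u\<in>F. \<forall>w. nb E F R' u \<noteq> {w})" by (erule exE)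
    then show ?thesis using that by (elim conjE)
  qed
  have "\<not> fill_step (F \<union> \<Union>R) E F F'" for F'
  proof
    assume "fill_step (F \<union> \<Union>R) E F F'"
    then obtain u w where "u \<in> F" "{x \<in> F \<union> \<Union>R. E u x \<and> x \<notin> F} = {w}"
      unfolding fill_step_def by blast
    moreover have "{x \<in> F \<union> \<Union>R. E u x \<and> x \<notin> F} = nb E F R u" unfolding nb_def by auto
    ultimately have "nb E F R u = {w}" by simp
    then show False using R(3) \<open>u \<in> F\<close> by blast
  qed
  then show ?thesis using R by blast
qed

lemma main:
  assumes G: "simple_graph V E"
  shows "zq_win V E q F t \<Longrightarrow> card (act E F) + t \<le> q \<Longrightarrow> z_win V E F t"
proof (induction rule: zq_win.induct)
  case (finished F t)
  then show ?case by (simp add: z_win.finished)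
next
  case (token v F t)
  have "act E (insert v F) \<subseteq> insert v (act E F)" unfolding act_def by auto
  then have "card (act E (insert v F)) \<le> card (insert v (act E F))"
    using act_finite[OF G] by (intro card_mono) auto
  also have "\<dots> \<le> card (act E F) + 1" using act_finite[OF G] by (simp add: card_insert_if)
  finally have "card (act E (insert v F)) + t \<le> q" using token.prems by simp
  then have "z_win V E (insert v F) t" by (rule token.IH)
  then show ?case by (rule z_win.token[OF token.hyps(1,2)])
next
  case (fill F F' t)
  obtain u w where uw: "u \<in> F" "w \<in> V" "w \<notin> F" "{x \<in> V. E u x \<and> x \<notin> F} = {w}"
    "F' = insert w F" using fill.hyps(1) unfolding fill_step_def by blast
  have Ev: "E u x \<Longrightarrow> x \<in> V" for x using G unfolding simple_graph_def by blast
  have uact: "u \<in> act E F" using uw unfolding act_def by blast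
  have "act E F' \<subseteq> insert w (act E F - {u})"
  proof
    fix y assume "y \<in> act E F'"
    then obtain x where x: "y \<in> F'" "E y x" "x \<notin> F'" unfolding act_def by blast
    show "y \<in> insert w (act E F - {u})"
    proof (cases "y = w")
      case False
      then have "y \<in> F" using x uw by auto
      moreover have "y \<noteq> u" using x uw Ev by blast
      ultimately show ?thesis using x uw unfolding act_def by auto
    qed simp
  qed
  then have "card (act E F') \<le> card (insert w (act E F - {u}))"
    using act_finite[OF G] by (intro card_mono) auto
  also have "\<dots> \<le> card (act E F - {u}) + 1" using act_finite[OF G] by (simp add: card_insert_if)
  also have "\<dots> = card (act E F)"
  proof -
    have "card (act E F) > 0" using uact act_finite[OF G] by (auto simp: card_gt_0_iff)
    then show ?thesis by (simp add: card_Diff_singleton[OF uact])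
  qed
  finally have "card (act E F') + t \<le> q" using fill.prems by simp
  then have "z_win V E F' t" by (rule fill.IH)
  then show ?case by (rule z_win.fill[OF fill.hyps(1)])
next
  case (query S F t)
  have cS: "card (act E F) < card S" using query.prems query.hyps(3) by linarith
  obtain R where R: "R \<subseteq> S" "R \<noteq> {}" "\<forall>F'. \<not> fill_step (F \<union> \<Union>R) E F F'"
    using blocking[OF G query.hyps(1,2) cS] by (elim exE conjE) assumption
  obtain F' where F': "(fill_step (F \<union> \<Union>R) E)\<^sup>*\<^sup>* F F'"
    "zq_win V E q F' t" "card (act E F') + t \<le> q \<longrightarrow> z_win V E F' t"
    using query.IH[rule_format, OF R(1) R(2)] by (elim exE conjE) assumption
  have "F' = F" using F'(1) R(3) by (cases rule: converse_rtranclpE) auto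
  then show ?case using F'(3) query.prems by simp
qed

lemma z_to_zq: "z_win V E F t \<Longrightarrow> zq_win V E q F t"
  by (induction rule: z_win.induct) (auto intro: zq_win.intros)

lemma z_exists: "finite V \<Longrightarrow> z_win V E F (card (V - F))"
proof (induction "card (V - F)" arbitrary: F rule: less_induct)
  case less
  show ?case
  proof (cases "V \<subseteq> F")
    case True then show ?thesis by (rule z_win.finished)
  next
    case False
    then obtain v where v: "v \<in> V" "v \<notin> F" by blast
    have c: "card (V - F) = Suc (card (V - insert v F))"
    proof -
      have "V - insert v F = (V - F) - {v}" by auto
      moreover have "v \<in> V - F" using v by simp
      moreover have "finite (V - F)" using less.prems by simp
      ultimately show ?thesis using card_Suc_Diff1[of "V - F" v] by simp
    qed
    have "z_win V E (insert v F) (card (V - insert v F))"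
      using less c by simp
    then show ?thesis unfolding c by (rule z_win.token[OF v])
  qed
qed

theorem theorem2p2:
  fixes V :: "'a set" and E :: "'a \<Rightarrow> 'a \<Rightarrow> bool" and k :: nat
  assumes "simple_graph V E"
    and "Zq V E k \<le> k"
  shows "Zq V E k = Z V E"
proof -
  have fin: "finite V" using assms(1) unfolding simple_graph_def by blast
  have ex: "z_win V E {} (card (V - {}))" by (rule z_exists[OF fin])
  have zq: "zq_win V E k {} (Zq V E k)"
    unfolding Zq_def using z_to_zq[OF ex] by (rule LeastI)
  have z: "z_win V E {} (Z V E)"
    unfolding Z_def using ex by (rule LeastI)
  have "act E {} = {}" unfolding act_def by simp
  then have "z_win V E {} (Zq V E k)" using main[OF assms(1) zq] assms(2) by simp
  then have "Z V E \<le> Zq V E k" unfolding Z_def by (rule Least_le)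
  moreover have "Zq V E k \<le> Z V E" unfolding Zq_def using z_to_zq[OF z] by (rule Least_le)
  ultimately show ?thesis by simp
qed

end
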